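(* Let $G$ be a finite group, let $p$ be a prime, and let $A$ be a subgroup of $G$ of maximum order among the self-centralizing subgroups of $G$ (subgroups $B$ with $C_G(B)=B$). \begin{enumerate} \item If $|G:A|=p$ and $|G:Z(G)|=p^i$ with $i>2$, then $A$ is the unique self-centralizing subgroup of $G$ of maximum order. The same conclusion holds if $p$ is the smallest prime divisor of $|G|$, $|G:A|=p$ and $|G:Z(G)|>p^2$. \item If $|G:A|=p^2$, $|G:Z(G)|=p^i$ with $i>4$, and $G$ possesses a subgroup $T$ of index $p$ in $G$ whose center has index $p^3$ in $G$, then $T$ is the unique subgroup of $G$ of index $p$ whose center has index $p^3$ in $G$. The same conclusion holds if $p$ is the smallest prime divisor of $|G|$, $|G:A|=p^2$, $|G:Z(G)|>p^4$, and $G$ possesses such a subgroup $T$. \item If $|G:A|=p^2$, $|G:Z(G)|=p^i$ with $i>4$, and $G$ does not possess a subgroup of index $p$ in $G$ whose center has index $p^3$ in $G$, then $A$ is the unique self-centralizing subgroup of $G$ of maximum order. The same conclusion holds if $p$ is the smallest prime divisor of $|G|$, $|G:A|=p^2$, $|G:Z(G)|>p^4$, and $G$ does not possess such a subgroup. \end{enumerate} *)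

theory Defs
  imports "HOL-Algebra.Algebra"
begin

definition centralizer :: "('a, 'b) monoid_scheme \<Rightarrow> 'a set \<Rightarrow> 'a set" where
  "centralizer G B = {g \<in> carrier G. \<forall>b \<in> B. g \<otimes>\<^bsub>G\<^esub> b = b \<otimes>\<^bsub>G\<^esub> g}"

definition group_center :: "('a, 'b) monoid_scheme \<Rightarrow> 'a set" where
  "group_center G = centralizer G (carrier G)"

definition grp_index :: "('a, 'b) monoid_scheme \<Rightarrow> 'a set \<Rightarrow> nat" where
  "grp_index G H = card (rcosets\<^bsub>G\<^esub> H)"

definition self_centralizing :: "('a, 'b) monoid_scheme \<Rightarrow> 'a set \<Rightarrow> bool" where
  "self_centralizing G B \<longleftrightarrow> subgroup B G \<and> centralizer G B = B"

definition max_self_centralizing :: "('a, 'b) monoid_scheme \<Rightarrow> 'a set \<Rightarrow> bool" where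
  "max_self_centralizing G A \<longleftrightarrow> self_centralizing G A \<and>
     (\<forall>B. self_centralizing G B \<longrightarrow> card B \<le> card A)"

definition unique_max_self_centralizing :: "('a, 'b) monoid_scheme \<Rightarrow> 'a set \<Rightarrow> bool" where
  "unique_max_self_centralizing G A \<longleftrightarrow> max_self_centralizing G A \<and>
     (\<forall>B. max_self_centralizing G B \<longrightarrow> B = A)"

definition special_sub :: "('a, 'b) monoid_scheme \<Rightarrow> nat \<Rightarrow> 'a set \<Rightarrow> bool" where
  "special_sub G p T \<longleftrightarrow> subgroup T G \<and> grp_index G T = p \<and>
     grp_index G (group_center (G\<lparr>carrier := T\<rparr>)) = p ^ 3"

definition smallest_prime_divisor :: "nat \<Rightarrow> nat \<Rightarrow> bool" where
  "smallest_prime_divisor p n \<longleftrightarrow> Factorial_Ring.prime p \<and> p dvd n \<and>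
     (\<forall>q. Factorial_Ring.prime q \<and> q dvd n \<longrightarrow> p \<le> q)"

end

theory Submission
  imports Defs "HOL-Computational_Algebra.Primes"
begin

lemma ar1:
  fixes n a z p :: nat
  assumes "n = p * a" "a * a \<le> n * z" "0 < n"
  shows "n \<le> p^2 * z"
proof -
  have "p * (a * a) \<le> p * (n * z)" using assms(2) by simp
  then have "n * a \<le> n * (p * z)" using assms(1) by (simp add: algebra_simps)
  then have "a \<le> p * z" using assms(3) by simp
  then have "p * a \<le> p * (p * z)" by simp
  then show ?thesis using assms(1) by (simp add: power2_eq_square algebra_simps)
qed

lemma ar2:
  fixes n a b w p :: nat
  assumes "n = p * a" "n = p^3 * b" "b * a \<le> n * w" "0 < n"
  shows "n \<le> p^4 * w"
proof -
  have e: "n * n = p^4 * (b * a)"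
  proof -
    have "n * n = (p^3 * b) * (p * a)" using assms(1,2) by simp
    also have "\<dots> = (p^3 * p) * (b * a)" by (simp add: algebra_simps)
    also have "p^3 * p = p^4" by (simp add: power_Suc2[symmetric] del: power_Suc2)
    finally show ?thesis .
  qed
  have "p^4 * (b * a) \<le> p^4 * (n * w)" using assms(3) by (rule mult_le_mono2)
  then have "n * n \<le> n * (p^4 * w)" using e by (simp add: algebra_simps)
  then show ?thesis using assms(4) by simp
qed

lemma ar3:
  fixes n a b c w p :: nat
  assumes "n = p^3 * a" "n = p^3 * b" "n = p^2 * c" "a * b \<le> c * w" "0 < n"
  shows "n \<le> p^4 * w"
proof -
  have "n * n = (p^3 * a) * (p^3 * b)" using assms(1,2) by metis
  also have "\<dots> = (p^3 * p^3) * (a * b)" by (simp add: algebra_simps)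
  also have "p^3 * p^3 = p^6" by (simp add: power_add[symmetric])
  finally have e: "n * n = p^6 * (a * b)" .
  have "p^6 * (a * b) \<le> p^6 * (c * w)" using assms(4) by (rule mult_le_mono2)
  then have "p^2 * (n * n) \<le> p^2 * (p^6 * (c * w))" using e by simp
  also have "p^2 * (p^6 * (c * w)) = (p^2 * c) * (p^6 * w)" by (simp add: algebra_simps)
  also have "\<dots> = n * (p^2 * p^4 * w)" using assms(3) by (simp add: power_add[symmetric])
  finally have "p^2 * n * n \<le> p^2 * n * (p^4 * w)" by (simp add: algebra_simps)
  moreover have "p^2 * n > 0" using assms(3,5) by (metis mult_is_0 not_gr0)
  ultimately show ?thesis by simp
qed

lemma ar4:
  fixes n a b c p :: nat
  assumes "n = p^2 * a" "n = p * c" "a * a \<le> c * d" "0 < n"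
  shows "n \<le> p^3 * d"
proof -
  have "p^4 * (a * a) \<le> p^4 * (c * d)" using assms(3) by simp
  then have "n * n \<le> p^3 * (p * c) * d" using assms(1) by (simp add: algebra_simps power2_eq_square power3_eq_cube power4_eq_xxxx)
  then have "n * n \<le> n * (p^3 * d)" using assms(2) by (simp add: algebra_simps)
  then show ?thesis using assms(4) by simp
qed

lemma ar5:
  fixes n a z p :: nat
  assumes "n = p^2 * a" "a * a \<le> n * z" "0 < n"
  shows "n \<le> p^4 * z"
proof -
  have "p^4 * (a * a) \<le> p^4 * (n * z)" using assms(2) by simp
  then have "n * n \<le> n * (p^4 * z)" using assms(1) by (simp add: algebra_simps power2_eq_square power4_eq_xxxx)
  then show ?thesis using assms(3) by simp
qed

context group
begin

lemma centralizer_subgroup: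
  assumes "S \<subseteq> carrier G"
  shows "subgroup (centralizer G S) G"
proof (rule subgroupI)
  show "centralizer G S \<subseteq> carrier G" by (auto simp: centralizer_def)
  have "\<one> \<in> centralizer G S" using assms by (auto simp: centralizer_def)
  then show "centralizer G S \<noteq> {}" by blast
next
  fix a assume a: "a \<in> centralizer G S"
  show "inv a \<in> centralizer G S"
    unfolding centralizer_def
  proof (safe)
    show "inv a \<in> carrier G" using a by (auto simp: centralizer_def)
    fix b assume b: "b \<in> S"
    have bc: "b \<in> carrier G" using b assms by auto
    have ac: "a \<in> carrier G" and ab: "a \<otimes> b = b \<otimes> a" using a b by (auto simp: centralizer_def)
    have "inv a \<otimes> b = inv a \<otimes> (b \<otimes> a) \<otimes> inv a" using ac bc by (simp add: m_assoc)
    also have "\<dots> = inv a \<otimes> (a \<otimes> b) \<otimes> inv a" using ab by simp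
    also have "\<dots> = b \<otimes> inv a" using ac bc by (simp add: m_assoc[symmetric])
    finally show "inv a \<otimes> b = b \<otimes> inv a" .
  qed
next
  fix a c assume a: "a \<in> centralizer G S" and c: "c \<in> centralizer G S"
  show "a \<otimes> c \<in> centralizer G S" unfolding centralizer_def
  proof safe
    show "a \<otimes> c \<in> carrier G" using a c by (auto simp: centralizer_def)
    fix b assume b: "b \<in> S"
    have bc: "b \<in> carrier G" using b assms by auto
    have ac: "a \<in> carrier G" and ab: "a \<otimes> b = b \<otimes> a" using a b by (auto simp: centralizer_def)
    have cc: "c \<in> carrier G" and cb: "c \<otimes> b = b \<otimes> c" using c b by (auto simp: centralizer_def)
    have "a \<otimes> c \<otimes> b = a \<otimes> (c \<otimes> b)" using ac bc cc by (simp add: m_assoc)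
    also have "\<dots> = (a \<otimes> b) \<otimes> c" using ac bc cc cb by (simp add: m_assoc)
    also have "\<dots> = b \<otimes> (a \<otimes> c)" using ac bc cc ab by (simp add: m_assoc)
    finally show "a \<otimes> c \<otimes> b = b \<otimes> (a \<otimes> c)" .
  qed
qed

lemma gi: "subgroup H G \<Longrightarrow> grp_index G H * card H = order G"
  unfolding grp_index_def by (rule lagrange)

lemma card_sub_pos:
  assumes "finite (carrier G)" "subgroup H G" shows "card H > 0"
proof -
  have "finite H" using assms subgroup.subset finite_subset by blast
  moreover have "\<one> \<in> H" using assms(2) subgroup.one_closed by blast
  ultimately show ?thesis by (auto simp: card_gt_0_iff)
qed

lemma prod_card:
  assumes fin: "finite (carrier G)" and H: "subgroup H G" and K: "subgroup K G"
  shows "card H * card K \<le> order G * card (H \<inter> K)"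
proof -
  have Hsub: "H \<subseteq> carrier G" using H subgroup.subset by blast
  have Ksub: "K \<subseteq> carrier G" using K subgroup.subset by blast
  have finR: "finite (rcosets K)" using fin by (simp add: RCOSETS_def)
  have finHK: "finite (H \<inter> K)" using fin Hsub finite_subset by blast
  have cov: "H \<subseteq> (\<Union>C\<in>rcosets K. H \<inter> C)" using rcosets_part_G[OF K] Hsub by blast
  have fib: "card (H \<inter> C) \<le> card (H \<inter> K)" if C: "C \<in> rcosets K" for C
  proof (cases "H \<inter> C = {}")
    case True then show ?thesis by simp
  next
    case False
    then obtain h0 where h0: "h0 \<in> H" "h0 \<in> C" by blast
    have h0c: "h0 \<in> carrier G" using h0 Hsub by auto
    obtain a where a: "a \<in> carrier G" "C = K #> a" using C unfolding RCOSETS_def by blast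
    have Ceq: "C = K #> h0" using repr_independence[of h0 K a] a h0 K by simp
    show ?thesis
    proof (rule card_inj_on_le[where f = "\<lambda>x. x \<otimes> inv h0"])
      show "inj_on (\<lambda>x. x \<otimes> inv h0) (H \<inter> C)"
        by (rule inj_onI) (use h0c Hsub in \<open>metis IntD1 inv_closed right_cancel subsetD\<close>)
      show "(\<lambda>x. x \<otimes> inv h0) ` (H \<inter> C) \<subseteq> H \<inter> K"
      proof
        fix y assume "y \<in> (\<lambda>x. x \<otimes> inv h0) ` (H \<inter> C)"
        then obtain x where x: "x \<in> H" "x \<in> K #> h0" "y = x \<otimes> inv h0" using Ceq by blast
        obtain k where k: "k \<in> K" "x = k \<otimes> h0" using x(2) unfolding r_coset_def by blast
        have kc: "k \<in> carrier G" using k Ksub by auto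
        have "y = k" using x(3) k(2) kc h0c by (simp add: m_assoc)
        moreover have "y \<in> H" using x h0 H by (simp add: subgroup.m_closed subgroup.m_inv_closed)
        ultimately show "y \<in> H \<inter> K" using k by auto
      qed
      show "finite (H \<inter> K)" by (rule finHK)
    qed
  qed
  have "card H \<le> card (\<Union>C\<in>rcosets K. H \<inter> C)"
    by (rule card_mono) (use finR fin Hsub finite_subset cov in auto)
  also have "\<dots> \<le> (\<Sum>C\<in>rcosets K. card (H \<inter> C))" by (rule card_UN_le[OF finR])
  also have "\<dots> \<le> card (rcosets K) * card (H \<inter> K)"
    using sum_bounded_above[of "rcosets K" "\<lambda>C. card (H \<inter> C)" "card (H \<inter> K)"] fib by auto
  finally have "card H * card K \<le> card (rcosets K) * card (H \<inter> K) * card K" by simp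
  also have "\<dots> = order G * card (H \<inter> K)" using lagrange[OF K] by (simp add: algebra_simps)
  finally show ?thesis .
qed

lemma prod_card_in:
  assumes fin: "finite (carrier G)" and H: "subgroup H G" and K: "subgroup K G"
    and L: "subgroup L G" and HL: "H \<subseteq> L" and KL: "K \<subseteq> L"
  shows "card H * card K \<le> card L * card (H \<inter> K)"
proof -
  interpret L: group "G\<lparr>carrier := L\<rparr>" by (rule subgroup_imp_group[OF L])
  have "finite (carrier (G\<lparr>carrier := L\<rparr>))" using fin L by (simp add: rev_finite_subset subgroup.subset)
  from L.prod_card[OF this subgroup_incl[OF H L HL] subgroup_incl[OF K L KL]]
  show ?thesis by (simp add: order_def)
qed

lemma card_dvd_sub:
  assumes H: "subgroup H G" and K: "subgroup K G" and HK: "H \<subseteq> K"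
  shows "card H dvd card K"
proof -
  interpret K: group "G\<lparr>carrier := K\<rparr>" by (rule subgroup_imp_group[OF K])
  from K.lagrange[OF subgroup_incl[OF H K HK]]
  have "\<exists>c. c * card H = card K" by (auto simp: order_def)
  then obtain c where "c * card H = card K" by blast
  then show ?thesis by (metis dvd_triv_right)
qed

lemma card_dvd_order:
  assumes H: "subgroup H G" shows "card H dvd order G"
  using lagrange[OF H] by (metis dvd_triv_right)

definition commut :: "'a set \<Rightarrow> bool" where
  "commut S \<longleftrightarrow> (\<forall>x\<in>S. \<forall>y\<in>S. x \<otimes> y = y \<otimes> x)"

lemma commut_closure:
  assumes S: "S \<subseteq> carrier G" and c: "commut S"
  shows "\<exists>L. subgroup L G \<and> S \<subseteq> L \<and> commut L"
proof -
  define C1 where "C1 = centralizer G S"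
  define L where "L = C1 \<inter> centralizer G C1"
  have C1s: "C1 \<subseteq> carrier G" by (auto simp: C1_def centralizer_def)
  have "subgroup L G" unfolding L_def
    by (rule subgroups_Inter_pair) (use centralizer_subgroup[OF S] centralizer_subgroup[OF C1s] C1_def in auto)
  moreover have "S \<subseteq> L"
  proof
    fix x assume x: "x \<in> S"
    have xc: "x \<in> carrier G" using x S by blast
    have x1: "x \<in> C1" unfolding C1_def centralizer_def using x xc c unfolding commut_def by blast
    have "\<forall>y\<in>C1. x \<otimes> y = y \<otimes> x" unfolding C1_def centralizer_def using x by simp
    then have "x \<in> centralizer G C1" unfolding centralizer_def using xc by blast
    then show "x \<in> L" using x1 L_def by blast
  qed
  moreover have "commut L"
    unfolding commut_def
  proof (intro ballI)
    fix x y assume "x \<in> L" "y \<in> L"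
    then have "x \<in> centralizer G C1" "y \<in> C1" using L_def by auto
    then show "x \<otimes> y = y \<otimes> x" unfolding centralizer_def by blast
  qed
  ultimately show ?thesis by blast
qed

lemma sc_commut: "self_centralizing G B \<Longrightarrow> commut B"
  unfolding self_centralizing_def commut_def centralizer_def by blast

lemma sc_center: "self_centralizing G B \<Longrightarrow> group_center G \<subseteq> B"
  unfolding self_centralizing_def group_center_def centralizer_def
  using subgroup.subset by blast

lemma center_subgroup: "subgroup (group_center G) G"
  unfolding group_center_def by (rule centralizer_subgroup) simp

lemma abelian_bound:
  assumes fin: "finite (carrier G)" and A: "max_self_centralizing G A"
    and S: "S \<subseteq> carrier G" and c: "commut S"
  shows "\<exists>L. subgroup L G \<and> S \<subseteq> L \<and> commut L \<and> card L \<le> card A"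
proof -
  define F where "F = {L. subgroup L G \<and> S \<subseteq> L \<and> commut L}"
  have Fne: "F \<noteq> {}" using commut_closure[OF S c] F_def by blast
  have Ffin: "finite F"
  proof (rule finite_subset[of F "Pow (carrier G)"])
    show "F \<subseteq> Pow (carrier G)" using F_def subgroup.subset by blast
  qed (use fin in simp)
  define m where "m = Max (card ` F)"
  have "m \<in> card ` F" unfolding m_def using Ffin Fne by (intro Max_in) auto
  then obtain M where M: "M \<in> F" "card M = m" by blast
  have Mmax: "card L \<le> card M" if "L \<in> F" for L
    using M(2) Ffin that unfolding m_def by (simp add: Max_ge)
  have Msub: "subgroup M G" and SM: "S \<subseteq> M" and Mc: "commut M" using M(1) F_def by auto
  have Mcar: "M \<subseteq> carrier G" using Msub subgroup.subset by blast
  have "centralizer G M = M"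
  proof
    show "M \<subseteq> centralizer G M" using Mc Mcar unfolding commut_def centralizer_def by auto
    show "centralizer G M \<subseteq> M"
    proof
      fix g assume g: "g \<in> centralizer G M"
      have gc: "g \<in> carrier G" using g by (auto simp: centralizer_def)
      have "commut (insert g M)" using g Mc unfolding commut_def centralizer_def by auto
      then obtain L where L: "subgroup L G" "insert g M \<subseteq> L" "commut L"
        using commut_closure[of "insert g M"] gc Mcar by blast
      have "L \<in> F" using L SM F_def by auto
      then have "card L \<le> card M" by (rule Mmax)
      moreover have "finite L" using L(1) fin subgroup.subset finite_subset by blast
      ultimately have "M = L" using L(2) card_subset_eq[of L M] by (metis card_seteq insert_subset)
      then show "g \<in> M" using L(2) by auto
    qed
  qed
  then have "self_centralizing G M" using Msub self_centralizing_def by blast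
  then have "card M \<le> card A" using A max_self_centralizing_def by blast
  then show ?thesis using Msub SM Mc by blast
qed

lemma max_step:
  assumes fin: "finite (carrier G)" and p: "Factorial_Ring.prime p" and T: "subgroup T G" and H: "subgroup H G"
    and TH: "T \<subseteq> H" "T \<noteq> H" and o: "order G = p * card T"
  shows "H = carrier G"
proof -
  obtain m where m: "card H = card T * m" using card_dvd_sub[OF T H TH(1)] by blast
  obtain r where r: "order G = card H * r" using card_dvd_order[OF H] by blast
  have Tpos: "card T > 0" using card_sub_pos[OF fin T] .
  have "card T * p = card T * (m * r)" using o m r by (metis mult.assoc mult.commute)
  then have "p = m * r" using Tpos by (metis mult_left_cancel not_gr0)
  have finH: "finite H" using fin H subgroup.subset finite_subset by blast
  have "card T < card H" using TH finH psubset_card_mono by blast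
  then have "m \<noteq> 1" using m by auto
  then have "r = 1" using p \<open>p = m * r\<close> prime_product by blast
  then have "card H = card (carrier G)" using r order_def[of G] by simp
  then show ?thesis using card_subset_eq[OF fin] H subgroup.subset by blast
qed

lemma mid_step:
  assumes fin: "finite (carrier G)" and p: "Factorial_Ring.prime p" and T: "subgroup T G" and H: "subgroup H G"
    and TH: "T \<subseteq> H" "T \<noteq> H" and HG: "H \<noteq> carrier G" and o: "order G = p^2 * card T"
  shows "order G = p * card H"
proof -
  obtain m where m: "card H = card T * m" using card_dvd_sub[OF T H TH(1)] by blast
  obtain r where r: "order G = card H * r" using card_dvd_order[OF H] by blast
  have Tpos: "card T > 0" using card_sub_pos[OF fin T] .
  have "card T * p^2 = card T * (m * r)" using o m r by (metis mult.assoc mult.commute)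
  then have e: "p^2 = m * r" using Tpos by (metis mult_left_cancel not_gr0)
  have finH: "finite H" using fin H subgroup.subset finite_subset by blast
  have "card T < card H" using TH finH psubset_card_mono by blast
  then have m1: "m \<noteq> 1" using m by auto
  have r1: "r \<noteq> 1"
  proof
    assume "r = 1"
    then have "card H = card (carrier G)" using r order_def[of G] by simp
    then show False using card_subset_eq[OF fin] H subgroup.subset HG by blast
  qed
  have "m dvd p^2" using e by simp
  then obtain i where i: "i \<le> 2" "m = p^i" using divides_primepow_nat[OF p] by blast
  have "i \<noteq> 0" using i m1 by auto
  moreover have "i \<noteq> 2" proof
    assume "i = 2" then have "m = p^2" using i by simp
    moreover have "p^2 > 0" using p prime_gt_0_nat by simp
    ultimately have "r = 1" using e by simp
    then show False using r1 by simp
  qed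
  ultimately have "i = 1" using i by auto
  then have "r = p" using e i p prime_gt_0_nat by (simp add: power2_eq_square)
  then show ?thesis using r by simp
qed

lemma sub_center: "T \<subseteq> carrier G \<Longrightarrow> group_center (G\<lparr>carrier := T\<rparr>) = T \<inter> centralizer G T"
  unfolding group_center_def centralizer_def by auto

lemma fin_sub: "finite (carrier G) \<Longrightarrow> subgroup H G \<Longrightarrow> finite H"
  by (meson rev_finite_subset subgroup.subset)

lemma sc_basic:
  assumes "max_self_centralizing G B"
  shows "subgroup B G" "centralizer G B = B" "commut B" "group_center G \<subseteq> B"
  using assms sc_commut sc_center unfolding max_self_centralizing_def self_centralizing_def by auto

lemma in_centralizer_commut:
  assumes "commut A" "A \<subseteq> carrier G" "D \<subseteq> A"
  shows "A \<subseteq> centralizer G D"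
  using assms unfolding commut_def centralizer_def by blast

lemma centralizer_all_center:
  assumes "centralizer G D = carrier G" "D \<subseteq> carrier G"
  shows "D \<subseteq> group_center G"
proof
  fix d assume d: "d \<in> D"
  have "\<forall>g\<in>carrier G. d \<otimes> g = g \<otimes> d"
  proof
    fix g assume "g \<in> carrier G"
    then have "g \<in> centralizer G D" using assms by simp
    then show "d \<otimes> g = g \<otimes> d" using d unfolding centralizer_def by simp
  qed
  then show "d \<in> group_center G" using d assms(2) unfolding group_center_def centralizer_def by blast
qed

lemma part1:
  assumes fin: "finite (carrier G)" and p: "Factorial_Ring.prime p"
    and A: "max_self_centralizing G A" and oA: "order G = p * card A"
    and oZ: "p^2 * card (group_center G) < order G"
  shows "unique_max_self_centralizing G A"
proof -
  have "B = A" if B: "max_self_centralizing G B" for B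
  proof (rule ccontr)
    assume ne: "B \<noteq> A"
    note Ab = sc_basic[OF A] and Bb = sc_basic[OF B]
    have cAB: "card B = card A" using A B unfolding max_self_centralizing_def by (meson antisym)
    have finA: "finite A" using fin_sub[OF fin Ab(1)] .
    have BnA: "\<not> B \<subseteq> A" using card_subset_eq[OF finA] cAB ne by blast
    define D where "D = A \<inter> B"
    have Acar: "A \<subseteq> carrier G" and Bcar: "B \<subseteq> carrier G" using Ab(1) Bb(1) subgroup.subset by auto
    have Dc: "D \<subseteq> carrier G" using D_def Acar by auto
    define C where "C = centralizer G D"
    have Csub: "subgroup C G" using centralizer_subgroup[OF Dc] C_def by simp
    have AC: "A \<subseteq> C" using in_centralizer_commut[OF Ab(3) Acar] D_def C_def by auto
    have BC: "B \<subseteq> C" using in_centralizer_commut[OF Bb(3) Bcar] D_def C_def by auto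
    have "A \<noteq> C" using BC BnA by blast
    then have Cc: "C = carrier G" using max_step[OF fin p Ab(1) Csub AC _ oA] by blast
    have DZ: "D \<subseteq> group_center G" using centralizer_all_center[OF _ Dc] Cc C_def by simp
    have "card A * card B \<le> order G * card D" using prod_card[OF fin Ab(1) Bb(1)] D_def by simp
    moreover have "card D \<le> card (group_center G)"
      using card_mono[OF fin_sub[OF fin center_subgroup] DZ] .
    ultimately have "card A * card A \<le> order G * card (group_center G)"
      using cAB by (metis le_trans mult_le_mono2)
    then have "order G \<le> p^2 * card (group_center G)"
      using ar1[OF oA] card_sub_pos[OF fin subgroup_self] by (simp add: order_def)
    then show False using oZ by simp
  qed
  then show ?thesis using A unfolding unique_max_self_centralizing_def by blast
qed

lemma special_facts:
  assumes "special_sub G p T"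
  shows "subgroup T G" "order G = p * card T"
    "subgroup (T \<inter> centralizer G T) G" "order G = p^3 * card (T \<inter> centralizer G T)"
proof -
  show T: "subgroup T G" using assms special_sub_def by blast
  have Tc: "T \<subseteq> carrier G" using T subgroup.subset by blast
  show "order G = p * card T" using gi[OF T] assms special_sub_def by (metis mult.commute)
  show Z: "subgroup (T \<inter> centralizer G T) G"
    using subgroups_Inter_pair[OF T centralizer_subgroup[OF Tc]] .
  have "grp_index G (T \<inter> centralizer G T) = p^3" using assms sub_center[OF Tc] special_sub_def by metis
  then show "order G = p^3 * card (T \<inter> centralizer G T)" using gi[OF Z] by (metis mult.commute)
qed

lemma part2_aux:
  assumes fin: "finite (carrier G)" and p: "Factorial_Ring.prime p"
    and T: "special_sub G p T" and T': "special_sub G p T'"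
    and z: "z \<in> T \<inter> centralizer G T" "z \<notin> T'"
  shows "order G \<le> p^4 * card (group_center G)"
proof -
  note t = special_facts[OF T] and t' = special_facts[OF T']
  define Z' where "Z' = T' \<inter> centralizer G T'"
  define Y where "Y = Z' \<inter> T"
  have Yc: "Y \<subseteq> carrier G" using Y_def t(1) subgroup.subset by blast
  define C where "C = centralizer G Y"
  have Csub: "subgroup C G" using centralizer_subgroup[OF Yc] C_def by simp
  have T'C: "T' \<subseteq> C"
    unfolding C_def Y_def Z'_def centralizer_def using t'(1) subgroup.subset by fastforce
  have zC: "z \<in> C"
    using z(1) unfolding C_def Y_def Z'_def centralizer_def by auto
  have "T' \<noteq> C" using zC z(2) by blast
  then have "C = carrier G" using max_step[OF fin p t'(1) Csub T'C _ t'(2)] by blast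
  then have YZ: "Y \<subseteq> group_center G" using centralizer_all_center[OF _ Yc] C_def by simp
  have "card Z' * card T \<le> order G * card Y"
    using prod_card[OF fin t'(3) t(1)] Z'_def Y_def by simp
  then have "order G \<le> p^4 * card Y"
    using ar2[OF t(2) t'(4)[folded Z'_def]] card_sub_pos[OF fin subgroup_self] by (simp add: order_def)
  moreover have "card Y \<le> card (group_center G)"
    using card_mono[OF fin_sub[OF fin center_subgroup] YZ] .
  ultimately show ?thesis by (meson le_trans mult_le_mono2)
qed

lemma part2:
  assumes fin: "finite (carrier G)" and p: "Factorial_Ring.prime p"
    and A: "max_self_centralizing G A" and oA: "order G = p^2 * card A"
    and oZ: "p^4 * card (group_center G) < order G"
    and T: "special_sub G p T" and T': "special_sub G p T'"
  shows "T' = T"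
proof (rule ccontr)
  assume ne: "T' \<noteq> T"
  note t = special_facts[OF T] and t' = special_facts[OF T']
  define Z1 where "Z1 = T \<inter> centralizer G T"
  define Z2 where "Z2 = T' \<inter> centralizer G T'"
  have s1: "Z1 \<subseteq> T'"
  proof (rule ccontr)
    assume "\<not> Z1 \<subseteq> T'"
    then obtain z where "z \<in> Z1" "z \<notin> T'" by blast
    then show False using part2_aux[OF fin p T T', of z] oZ Z1_def by simp
  qed
  have s2: "Z2 \<subseteq> T"
  proof (rule ccontr)
    assume "\<not> Z2 \<subseteq> T"
    then obtain z where "z \<in> Z2" "z \<notin> T" by blast
    then show False using part2_aux[OF fin p T' T, of z] oZ Z2_def by simp
  qed
  have Tc: "T \<subseteq> carrier G" and T'c: "T' \<subseteq> carrier G" using t(1) t'(1) subgroup.subset by auto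
  have Uc: "Z1 \<union> Z2 \<subseteq> carrier G" using Z1_def Z2_def Tc T'c by auto
  have cU: "commut (Z1 \<union> Z2)"
    unfolding commut_def
  proof (intro ballI)
    fix x y assume x: "x \<in> Z1 \<union> Z2" and y: "y \<in> Z1 \<union> Z2"
    show "x \<otimes> y = y \<otimes> x"
      using x y s1 s2 unfolding Z1_def Z2_def centralizer_def by auto
  qed
  obtain L where L: "subgroup L G" "Z1 \<union> Z2 \<subseteq> L" "card L \<le> card A"
    using abelian_bound[OF fin A Uc cU] by blast
  define W where "W = Z1 \<inter> Z2"
  have "card Z1 * card Z2 \<le> card L * card W"
    using prod_card_in[OF fin t(3)[folded Z1_def] t'(3)[folded Z2_def] L(1)] L(2) W_def by auto
  also have "\<dots> \<le> card A * card W" using L(3) by simp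
  finally have "order G \<le> p^4 * card W"
    using ar3[OF t(4)[folded Z1_def] t'(4)[folded Z2_def] oA] card_sub_pos[OF fin subgroup_self]
    by (simp add: order_def)
  moreover have "W \<subseteq> group_center G"
  proof -
    have Wc: "W \<subseteq> carrier G" using W_def Z1_def Tc by auto
    define C where "C = centralizer G W"
    have Csub: "subgroup C G" using centralizer_subgroup[OF Wc] C_def by simp
    have TC: "T \<subseteq> C" unfolding C_def W_def Z1_def centralizer_def using Tc by fastforce
    have T'C: "T' \<subseteq> C" unfolding C_def W_def Z2_def centralizer_def using T'c by fastforce
    have "card T' = card T" using t(2) t'(2) p prime_gt_0_nat by (metis mult_left_cancel not_gr0)
    then have "\<not> T' \<subseteq> T" using card_subset_eq[OF fin_sub[OF fin t(1)]] ne by blast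
    then have "T \<noteq> C" using T'C by blast
    then have "C = carrier G" using max_step[OF fin p t(1) Csub TC _ t(2)] by blast
    then show ?thesis using centralizer_all_center[OF _ Wc] C_def by simp
  qed
  then have "card W \<le> card (group_center G)"
    using card_mono[OF fin_sub[OF fin center_subgroup]] by blast
  ultimately have "order G \<le> p^4 * card (group_center G)" by (meson le_trans mult_le_mono2)
  then show False using oZ by simp
qed

lemma part3:
  assumes fin: "finite (carrier G)" and p: "Factorial_Ring.prime p"
    and A: "max_self_centralizing G A" and oA: "order G = p^2 * card A"
    and oZ: "p^4 * card (group_center G) < order G"
    and noT: "\<not> (\<exists>T. special_sub G p T)"
    and hk: "(\<exists>i. order G = p^i * card (group_center G)) \<or> smallest_prime_divisor p (order G)"
  shows "unique_max_self_centralizing G A"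
proof -
  have npos: "order G > 0" using card_sub_pos[OF fin subgroup_self] by (simp add: order_def)
  have p1: "p > 1" using p prime_gt_1_nat by blast
  have "B = A" if B: "max_self_centralizing G B" for B
  proof (rule ccontr)
    assume ne: "B \<noteq> A"
    note Ab = sc_basic[OF A] and Bb = sc_basic[OF B]
    have cAB: "card B = card A" using A B unfolding max_self_centralizing_def by (meson antisym)
    have finA: "finite A" using fin_sub[OF fin Ab(1)] .
    have finB: "finite B" using fin_sub[OF fin Bb(1)] .
    have BnA: "\<not> B \<subseteq> A" using card_subset_eq[OF finA] cAB ne by blast
    have AnB: "\<not> A \<subseteq> B" using card_subset_eq[OF finB] cAB ne by metis
    define D where "D = A \<inter> B"
    have Dsub: "subgroup D G" using subgroups_Inter_pair[OF Ab(1) Bb(1)] D_def by simp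
    have Acar: "A \<subseteq> carrier G" and Bcar: "B \<subseteq> carrier G" using Ab(1) Bb(1) subgroup.subset by auto
    have Dc: "D \<subseteq> carrier G" using D_def Acar by auto
    define C where "C = centralizer G D"
    have Csub: "subgroup C G" using centralizer_subgroup[OF Dc] C_def by simp
    have AC: "A \<subseteq> C" using in_centralizer_commut[OF Ab(3) Acar] D_def C_def by auto
    have BC: "B \<subseteq> C" using in_centralizer_commut[OF Bb(3) Bcar] D_def C_def by auto
    have AneC: "A \<noteq> C" using BC BnA by blast
    have prodAB: "card A * card A \<le> order G * card D" using prod_card[OF fin Ab(1) Bb(1)] D_def cAB by simp
    have CnG: "C \<noteq> carrier G"
    proof
      assume Cc: "C = carrier G"
      have DZ: "D \<subseteq> group_center G" using centralizer_all_center[OF _ Dc] Cc C_def by simp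
      have "card D \<le> card (group_center G)"
        using card_mono[OF fin_sub[OF fin center_subgroup] DZ] .
      then have "card A * card A \<le> order G * card (group_center G)"
        using prodAB by (metis le_trans mult_le_mono2)
      then have "order G \<le> p^4 * card (group_center G)" using ar5[OF oA _ npos] by simp
      then show False using oZ by simp
    qed
    have oC: "order G = p * card C" using mid_step[OF fin p Ab(1) Csub AC AneC CnG oA] .
    have Cc: "C \<subseteq> carrier G" using Csub subgroup.subset by blast
    have ZC: "C \<inter> centralizer G C = D"
    proof
      show "C \<inter> centralizer G C \<subseteq> D"
      proof
        fix x assume x: "x \<in> C \<inter> centralizer G C"
        then have "x \<in> centralizer G A" "x \<in> centralizer G B"
          using AC BC unfolding centralizer_def by auto
        then show "x \<in> D" using Ab(2) Bb(2) D_def by auto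
      qed
      show "D \<subseteq> C \<inter> centralizer G C"
        using AC Dc unfolding C_def D_def centralizer_def by auto
    qed
    have "card A * card B \<le> card C * card D"
      using prod_card_in[OF fin Ab(1) Bb(1) Csub AC BC] D_def by simp
    then have oD: "order G \<le> p^3 * card D" using ar4[OF oA oC _ npos] cAB by simp
    have DA: "D \<subseteq> A" "D \<noteq> A" using D_def AnB by auto
    obtain k where k: "card A = card D * k" using card_dvd_sub[OF Dsub Ab(1) DA(1)] by blast
    have Dpos: "card D > 0" using card_sub_pos[OF fin Dsub] .
    have "card D < card A" using DA finA psubset_card_mono by blast
    then have k1: "k > 1" using k by (metis mult.right_neutral nat_neq_iff less_one mult_0_right not_less_zero)
    have onk: "order G = p^2 * k * card D" using oA k by (simp add: algebra_simps)
    have "p^2 * k * card D \<le> p^3 * card D" using oD onk by simp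
    then have "p^2 * k \<le> p^2 * p" using Dpos by (simp add: power3_eq_cube power2_eq_square)
    then have kp: "k \<le> p" using p1 by simp
    have "k = p"
      using hk
    proof
      assume "\<exists>i. order G = p^i * card (group_center G)"
      then obtain i where i: "order G = p^i * card (group_center G)" by blast
      have ZD: "group_center G \<subseteq> D" using Ab(4) Bb(4) D_def by auto
      obtain s where s: "card D = card (group_center G) * s"
        using card_dvd_sub[OF center_subgroup Dsub ZD] by blast
      have Zpos: "card (group_center G) > 0" using card_sub_pos[OF fin center_subgroup] .
      have "p^i * card (group_center G) = (p^2 * k * s) * card (group_center G)"
        unfolding i[symmetric] onk s by (simp add: ac_simps)
      then have "p^i = p^2 * k * s" using Zpos by (metis mult_right_cancel not_gr0)
      then have "k dvd p^i" by (metis dvd_mult dvd_mult2 dvd_refl)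
      then obtain j where j: "k = p^j" using divides_primepow_nat[OF p] by blast
      have "j \<noteq> 0" using j k1 by (metis less_irrefl power_0)
      moreover have "j < 2"
      proof (rule ccontr)
        assume "\<not> j < 2"
        then have "p^2 \<le> p^j" using p1 by (simp add: power_increasing)
        then have "p * p \<le> p" using kp j by (metis le_trans power2_eq_square)
        then show False using p1 by simp
      qed
      ultimately have "j = 1" by simp
      then show "k = p" using j by simp
    next
      assume sp: "smallest_prime_divisor p (order G)"
      have "k \<noteq> 1" using k1 by simp
      then obtain q where q: "Factorial_Ring.prime q" "q dvd k" using prime_factor_nat by blast
      have "k dvd card A" using k by simp
      moreover have "card A dvd order G" using card_dvd_order[OF Ab(1)] .
      ultimately have "q dvd order G" using q(2) by (meson dvd_trans)
      then have "p \<le> q" using sp q(1) unfolding smallest_prime_divisor_def by blast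
      moreover have "q \<le> k" using q(2) k1 by (simp add: dvd_imp_le)
      ultimately show "k = p" using kp by simp
    qed
    then have oD3: "order G = p^3 * card D" using onk by (simp add: power3_eq_cube power2_eq_square)
    have "special_sub G p C"
      unfolding special_sub_def
    proof (intro conjI)
      show "subgroup C G" by (rule Csub)
      have "grp_index G C * card C = p * card C" using gi[OF Csub] oC by simp
      then show "grp_index G C = p" using card_sub_pos[OF fin Csub] by simp
      have "grp_index G D * card D = p^3 * card D" using gi[OF Dsub] oD3 by simp
      then have "grp_index G D = p^3" using Dpos by simp
      then show "grp_index G (group_center (G\<lparr>carrier := C\<rparr>)) = p ^ 3"
        using sub_center[OF Cc] ZC by simp
    qed
    then show False using noT by blast
  qed
  then show ?thesis using A unfolding unique_max_self_centralizing_def by blast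
qed

end

theorem corollary2p2:
  fixes G (structure) and p :: nat and A :: "'a set"
  assumes "group G" and "finite (carrier G)" and "Factorial_Ring.prime p"
    and "max_self_centralizing G A"
  shows
   "((grp_index G A = p \<and> (\<exists>i>2. grp_index G (group_center G) = p ^ i))
        \<longrightarrow> unique_max_self_centralizing G A)
    \<and> ((smallest_prime_divisor p (order G) \<and> grp_index G A = p
         \<and> grp_index G (group_center G) > p ^ 2)
        \<longrightarrow> unique_max_self_centralizing G A)
    \<and> (\<forall>T. (grp_index G A = p ^ 2 \<and> (\<exists>i>4. grp_index G (group_center G) = p ^ i)
              \<and> special_sub G p T)
          \<longrightarrow> (\<forall>T'. special_sub G p T' \<longrightarrow> T' = T))
    \<and> (\<forall>T. (smallest_prime_divisor p (order G) \<and> grp_index G A = p ^ 2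
              \<and> grp_index G (group_center G) > p ^ 4 \<and> special_sub G p T)
          \<longrightarrow> (\<forall>T'. special_sub G p T' \<longrightarrow> T' = T))
    \<and> ((grp_index G A = p ^ 2 \<and> (\<exists>i>4. grp_index G (group_center G) = p ^ i)
         \<and> \<not> (\<exists>T. special_sub G p T))
        \<longrightarrow> unique_max_self_centralizing G A)
    \<and> ((smallest_prime_divisor p (order G) \<and> grp_index G A = p ^ 2
         \<and> grp_index G (group_center G) > p ^ 4 \<and> \<not> (\<exists>T. special_sub G p T))
        \<longrightarrow> unique_max_self_centralizing G A)"
proof -
  interpret group G by (rule assms(1))
  note fin = assms(2) and p = assms(3) and A = assms(4)
  define Z where "Z = group_center G"
  have Zsub: "subgroup Z G" using center_subgroup Z_def by simp
  have Zpos: "card Z > 0" using card_sub_pos[OF fin Zsub] .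
  have p1: "p > 1" using p prime_gt_1_nat by blast
  have Asub: "subgroup A G" using sc_basic[OF A] by simp
  have gA: "grp_index G A * card A = order G" using gi[OF Asub] .
  have gZ: "grp_index G Z * card Z = order G" using gi[OF Zsub] .
  have ZI: "p^k * card Z < order G" if "\<exists>i>k. grp_index G Z = p ^ i" for k
  proof -
    from that obtain i where i0: "i > k \<and> grp_index G Z = p^i" ..
    then have i: "i > k" "grp_index G Z = p^i" by simp_all
    have pk: "p^k < p^i" using power_strict_increasing[OF i(1), of p] p1 by simp
    have lt: "p^k * card Z < p^i * card Z" using mult_less_mono1[OF pk Zpos] .
    have "p^i * card Z = order G" using gZ i(2) by simp
    then show ?thesis using lt by simp
  qed
  have ZI': "\<exists>i. order G = p^i * card Z" if "\<exists>i>k. grp_index G Z = p ^ i" for k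
  proof -
    from that obtain i where "i > k \<and> grp_index G Z = p ^ i" ..
    then have "grp_index G Z = p ^ i" by simp
    then have "order G = p ^ i * card Z" using gZ by simp
    then show ?thesis ..
  qed
  have ZG: "p^k * card Z < order G" if "grp_index G Z > p^k" for k
  proof -
    have "p^k * card Z < grp_index G Z * card Z" using that Zpos by simp
    then show ?thesis using gZ by simp
  qed
  show ?thesis
  proof (intro conjI impI allI)
    assume h: "grp_index G A = p \<and> (\<exists>i>2. grp_index G (group_center G) = p ^ i)"
    have oA: "order G = p * card A" using h gA by auto
    show "unique_max_self_centralizing G A"
      using part1[OF fin p A oA] h ZI[of 2] Z_def by blast
  next
    assume h: "smallest_prime_divisor p (order G) \<and> grp_index G A = p \<and> p^2 < grp_index G (group_center G)"
    have oA: "order G = p * card A" using h gA by auto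
    show "unique_max_self_centralizing G A"
      using part1[OF fin p A oA] h ZG[of 2] Z_def by blast
  next
    fix T T'
    assume h: "grp_index G A = p ^ 2 \<and> (\<exists>i>4. grp_index G (group_center G) = p ^ i) \<and> special_sub G p T"
      and T': "special_sub G p T'"
    have oA: "order G = p^2 * card A" using h gA by auto
    show "T' = T" using part2[OF fin p A oA _ _ T'] h ZI[of 4] Z_def by blast
  next
    fix T T'
    assume h: "smallest_prime_divisor p (order G) \<and> grp_index G A = p ^ 2 \<and> p^4 < grp_index G (group_center G) \<and> special_sub G p T"
      and T': "special_sub G p T'"
    have oA: "order G = p^2 * card A" using h gA by auto
    show "T' = T" using part2[OF fin p A oA _ _ T'] h ZG[of 4] Z_def by blast
  next
    assume h: "grp_index G A = p ^ 2 \<and> (\<exists>i>4. grp_index G (group_center G) = p ^ i) \<and> \<not> (\<exists>T. special_sub G p T)"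
    have oA: "order G = p^2 * card A" using h gA by auto
    show "unique_max_self_centralizing G A"
      using part3[OF fin p A oA] h ZI[of 4] ZI'[of 4] Z_def by blast
  next
    assume h: "smallest_prime_divisor p (order G) \<and> grp_index G A = p ^ 2 \<and> p^4 < grp_index G (group_center G) \<and> \<not> (\<exists>T. special_sub G p T)"
    have oA: "order G = p^2 * card A" using h gA by auto
    show "unique_max_self_centralizing G A"
      using part3[OF fin p A oA] h ZG[of 4] Z_def by blast
  qed
qed

end
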